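(* Assume the true joint propensity score factorizes as $\psi(t,z;\mathbf{x})=p(t,z\mid\mathbf{x})=\phi(z;\mathbf{x}_z)\,e(t;\mathbf{x}_t)$, and let $e_\eta$, $\phi_\eta$ be positive estimates satisfying the bounded odds-ratio condition: there exist $\Gamma_t\ge1$ and $\Gamma_z\ge1$ such that for all $t,\mathbf{x}_t$, $\frac{1}{\Gamma_t}\le \frac{e_\eta(t;\mathbf{x}_t)}{e(t;\mathbf{x}_t)}\le\Gamma_t$, and for all $z,\mathbf{x}_z$, $\frac{1}{\Gamma_z}\le\frac{\phi_\eta(z;\mathbf{x}_z)}{\phi(z;\mathbf{x}_z)}\le\Gamma_z$. Let the weights be $w_\eta(t,z,\mathbf{x})=\frac{1}{\phi_\eta(z;\mathbf{x}_z)e_\eta(t;\mathbf{x}_t)}$, let $\Phi:\mathcal{X}'\to\mathcal{R}$ be a one-to-one representation, and assume $\mathcal{R}$ is bounded with $\mathrm{diam}(\mathcal{R})=\sup_{r,r'\in\mathcal{R}}\|r-r'\|_2$. Then $$\mathcal{W}\big(p_\Phi(r)p(t,z),\,q_{\Phi,\eta}(r\mid t,z)p(t,z)\big)\le \mathrm{diam}(\mathcal{R})\sqrt{\log\Gamma_t+\log\Gamma_z}.$$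
   Context: Setting: each unit has combined features $\mathbf{x}\in\mathcal{X}'=\mathcal{X}\times\mathcal{X}^{|\mathcal{N}|}$ (own and neighbours' features), binary treatment $t\in\{0,1\}$ and neighbourhood exposure $z\in[0,1]$, with joint distribution having marginals $p(\mathbf{x})$, $p(t,z)$, conditionals $p(\mathbf{x}\mid t,z)$ and $p(t,z\mid\mathbf{x})$; overlap holds, i.e. $p(t,z\mid\mathbf{x})>0$. $\mathbf{x}_t$ and $\mathbf{x}_z$ are sub-vectors of $\mathbf{x}$ (the features directly affecting $t$ and $z$ respectively); $e(t;\mathbf{x}_t)=p(t\mid\mathbf{x}_t)$ is the individual propensity score and $\phi(z;\mathbf{x}_z)=p(z\mid\mathbf{x}_z)$ the neighbourhood propensity score. Reweighted distribution: $q_\eta(\mathbf{x}\mid t,z)=w_\eta(t,z,\mathbf{x})p(\mathbf{x}\mid t,z)/c(t,z)$ with $c(t,z)=\int w_\eta(t,z,\mathbf{x})p(\mathbf{x}\mid t,z)d\mathbf{x}$ (assumed finite). $p_\Phi(r)$ and $q_{\Phi,\eta}(r\mid t,z)$ are the distributions of $r=\Phi(\mathbf{x})$ under $p(\mathbf{x})$ and $q_\eta(\mathbf{x}\mid t,z)$. $p_\Phi(r)p(t,z)$ denotes the product distribution on $\mathcal{R}\times\{0,1\}\times[0,1]$, and $q_{\Phi,\eta}(r\mid t,z)p(t,z)$ the joint distribution with $(t,z)\sim p(t,z)$ and $r\sim q_{\Phi,\eta}(\cdot\mid t,z)$. $\mathcal{W}$ denotes the 1-Wasserstein distance between distributions on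 $\mathcal{R}\times\{0,1\}\times[0,1]$ with respect to the ground cost $d((r,t,z),(r',t',z'))=\|r-r'\|_2$. *)

theory Defs
  imports "HOL-Probability.Probability"
begin

definition couplings :: "'a measure \<Rightarrow> 'a measure \<Rightarrow> ('a \<times> 'a) measure set" where
  "couplings P Q = {\<gamma>. sets \<gamma> = sets (P \<Otimes>\<^sub>M Q) \<and> prob_space \<gamma> \<and>
                        distr \<gamma> P fst = P \<and> distr \<gamma> Q snd = Q}"

definition wasserstein1 :: "('a \<Rightarrow> 'a \<Rightarrow> real) \<Rightarrow> 'a measure \<Rightarrow> 'a measure \<Rightarrow> ennreal" where
  "wasserstein1 d P Q = (INF \<gamma>\<in>couplings P Q. \<integral>\<^sup>+ w. ennreal (d (fst w) (snd w)) \<partial>\<gamma>)"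

definition rep_cost :: "('r::euclidean_space \<times> bool \<times> real) \<Rightarrow> ('r \<times> bool \<times> real) \<Rightarrow> real" where
  "rep_cost a b = norm (fst a - fst b)"

text \<open>Reference measure for (t,z): counting measure on bool times Lebesgue measure on the reals.
  The joint density f x t z of (x,t,z) is w.r.t. mu (x) times tz_ref.\<close>

definition tz_ref :: "(bool \<times> real) measure" where
  "tz_ref = (count_space UNIV) \<Otimes>\<^sub>M lborel"

definition px :: "('x \<Rightarrow> bool \<Rightarrow> real \<Rightarrow> real) \<Rightarrow> 'x \<Rightarrow> real" where
  "px f x = (\<integral> tz. f x (fst tz) (snd tz) \<partial>tz_ref)"

definition ptz :: "'x measure \<Rightarrow> ('x \<Rightarrow> bool \<Rightarrow> real \<Rightarrow> real) \<Rightarrow> bool \<Rightarrow> real \<Rightarrow> real" where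
  "ptz \<mu> f t z = (\<integral> x. f x t z \<partial>\<mu>)"

definition psi :: "('x \<Rightarrow> bool \<Rightarrow> real \<Rightarrow> real) \<Rightarrow> 'x \<Rightarrow> bool \<Rightarrow> real \<Rightarrow> real" where
  "psi f x t z = f x t z / px f x"

definition cond_x :: "'x measure \<Rightarrow> ('x \<Rightarrow> bool \<Rightarrow> real \<Rightarrow> real) \<Rightarrow> 'x \<Rightarrow> bool \<Rightarrow> real \<Rightarrow> real" where
  "cond_x \<mu> f x t z = f x t z / ptz \<mu> f t z"

definition cnorm :: "'x measure \<Rightarrow> ('x \<Rightarrow> bool \<Rightarrow> real \<Rightarrow> real) \<Rightarrow> (bool \<Rightarrow> real \<Rightarrow> 'x \<Rightarrow> real)
                     \<Rightarrow> bool \<Rightarrow> real \<Rightarrow> real" where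
  "cnorm \<mu> f w t z = (\<integral> x. w t z x * cond_x \<mu> f x t z \<partial>\<mu>)"

definition q_cond :: "'x measure \<Rightarrow> ('x \<Rightarrow> bool \<Rightarrow> real \<Rightarrow> real) \<Rightarrow> (bool \<Rightarrow> real \<Rightarrow> 'x \<Rightarrow> real)
                     \<Rightarrow> 'x \<Rightarrow> bool \<Rightarrow> real \<Rightarrow> real" where
  "q_cond \<mu> f w x t z = w t z x * cond_x \<mu> f x t z / cnorm \<mu> f w t z"

definition target_space :: "('r::euclidean_space \<times> bool \<times> real) measure" where
  "target_space = borel \<Otimes>\<^sub>M (count_space UNIV \<Otimes>\<^sub>M borel)"

definition rep_map :: "('x \<Rightarrow> 'r) \<Rightarrow> 'x \<times> bool \<times> real \<Rightarrow> 'r \<times> bool \<times> real" where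
  "rep_map \<Phi> = (\<lambda>(x, t, z). (\<Phi> x, t, z))"

definition P_prod :: "'x measure \<Rightarrow> ('x \<Rightarrow> bool \<Rightarrow> real \<Rightarrow> real) \<Rightarrow> ('x \<Rightarrow> 'r::euclidean_space)
                      \<Rightarrow> ('r \<times> bool \<times> real) measure" where
  "P_prod \<mu> f \<Phi> =
     distr (density \<mu> (\<lambda>x. ennreal (px f x)) \<Otimes>\<^sub>M density tz_ref (\<lambda>tz. ennreal (ptz \<mu> f (fst tz) (snd tz))))
           target_space (rep_map \<Phi>)"

definition Q_joint :: "'x measure \<Rightarrow> ('x \<Rightarrow> bool \<Rightarrow> real \<Rightarrow> real) \<Rightarrow> (bool \<Rightarrow> real \<Rightarrow> 'x \<Rightarrow> real)
                      \<Rightarrow> ('x \<Rightarrow> 'r::euclidean_space) \<Rightarrow> ('r \<times> bool \<times> real) measure" where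
  "Q_joint \<mu> f w \<Phi> =
     distr (density (\<mu> \<Otimes>\<^sub>M tz_ref)
              (\<lambda>(x, t, z). ennreal (q_cond \<mu> f w x t z * ptz \<mu> f t z)))
           target_space (rep_map \<Phi>)"

end

theory Submission
  imports Defs
begin

lemma coupling_bound:
  fixes A QB R :: "'b measure" and T :: "'c measure" and g :: "'b \<Rightarrow> 'c" and d :: "'c \<Rightarrow> 'c \<Rightarrow> real"
  assumes pA: "prob_space A" and pR: "prob_space R"
    and sR: "sets R = sets A" and sQ: "sets QB = sets A"
    and k: "0 \<le> \<kappa>" "\<kappa> \<le> 1"
    and dec: "\<And>S. S \<in> sets A \<Longrightarrow> emeasure QB S = ennreal \<kappa> * emeasure A S + ennreal (1-\<kappa>) * emeasure R S"
    and g[measurable]: "g \<in> measurable A T"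
    and dmeas: "(\<lambda>w. d (fst w) (snd w)) \<in> borel_measurable (T \<Otimes>\<^sub>M T)"
    and d0: "\<And>\<omega>. \<omega>\<in>space A \<Longrightarrow> d (g \<omega>) (g \<omega>) = 0"
    and dD: "\<And>\<omega> \<omega>'. \<omega>\<in>space A \<Longrightarrow> \<omega>'\<in>space A \<Longrightarrow> d (g \<omega>) (g \<omega>') \<le> D"
  shows "wasserstein1 d (distr A T g) (distr QB T g) \<le> ennreal ((1-\<kappa>)*D)"
proof -
  interpret A: prob_space A by fact
  interpret R: prob_space R by fact
  interpret AR: pair_prob_space A R ..
  have pAR: "prob_space (A \<Otimes>\<^sub>M R)" by (rule AR.P.prob_space_axioms)
  have sfAR: "sigma_finite_measure (A \<Otimes>\<^sub>M R)" by (rule prob_space_imp_sigma_finite[OF pAR])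
  interpret C: sigma_finite_measure "count_space (UNIV::bool set)"
    by (rule sigma_finite_measure_count_space_finite) simp
  interpret CAR: pair_sigma_finite "count_space (UNIV::bool set)" "A \<Otimes>\<^sub>M R" ..
  define S where "S = count_space (UNIV::bool set) \<Otimes>\<^sub>M (A \<Otimes>\<^sub>M R)"
  define wt where "wt = (\<lambda>p::bool \<times> 'b \<times> 'b. ennreal (if fst p then \<kappa> else 1-\<kappa>))"
  define h where "h = (\<lambda>p::bool \<times> 'b \<times> 'b. (g (fst (snd p)), g (if fst p then fst (snd p) else snd (snd p))))"
  define \<gamma> where "\<gamma> = distr (density S wt) (T \<Otimes>\<^sub>M T) h"
  have gR[measurable]: "g \<in> measurable R T" using g unfolding measurable_cong_sets[OF sR refl] .
  have wt_meas[measurable]: "wt \<in> borel_measurable S" unfolding wt_def S_def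
    by (rule measurable_compose[OF measurable_fst, where g="\<lambda>c. ennreal (if c then \<kappa> else 1-\<kappa>)"]) simp
  have h_meas[measurable]: "h \<in> measurable S (T \<Otimes>\<^sub>M T)"
  proof -
    have s1: "(\<lambda>p::bool \<times> 'b \<times> 'b. fst (snd p)) \<in> measurable S A"
      unfolding S_def by (rule measurable_compose[OF measurable_snd measurable_fst])
    have s2': "(\<lambda>p::bool \<times> 'b \<times> 'b. snd (snd p)) \<in> measurable S R"
      unfolding S_def by (rule measurable_compose[OF measurable_snd measurable_snd])
    have s2: "(\<lambda>p::bool \<times> 'b \<times> 'b. snd (snd p)) \<in> measurable S A"
      using s2' unfolding measurable_cong_sets[OF refl sR] .
    have c: "{p \<in> space S. fst p} \<in> sets S"
    proof -
      have "{p \<in> space S. fst p} = fst -` {True} \<inter> space S" by auto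
      also have "\<dots> \<in> sets S" unfolding S_def
        by (rule measurable_sets[OF measurable_fst]) simp
      finally show ?thesis .
    qed
    have s3: "(\<lambda>p::bool \<times> 'b \<times> 'b. if fst p then fst (snd p) else snd (snd p)) \<in> measurable S A"
      by (rule measurable_If[OF s1 s2 c])
    show ?thesis unfolding h_def
      by (rule measurable_Pair; rule measurable_compose[OF _ g]) (rule s1, rule s3)
  qed
  have intS: "integral\<^sup>N S F = (\<integral>\<^sup>+ p. F (True, p) \<partial>(A \<Otimes>\<^sub>M R)) + (\<integral>\<^sup>+ p. F (False, p) \<partial>(A \<Otimes>\<^sub>M R))"
    if [measurable]: "F \<in> borel_measurable S" for F
  proof -
    have "integral\<^sup>N S F = (\<integral>\<^sup>+ c. \<integral>\<^sup>+ p. F (c, p) \<partial>(A \<Otimes>\<^sub>M R) \<partial>count_space UNIV)"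
      unfolding S_def by (rule sigma_finite_measure.nn_integral_fst[OF sfAR, symmetric]) (use that in \<open>simp add: S_def\<close>)
    also have "\<dots> = (\<Sum>c\<in>UNIV. \<integral>\<^sup>+ p. F (c, p) \<partial>(A \<Otimes>\<^sub>M R))"
      by (rule nn_integral_count_space_finite) simp
    also have "\<dots> = (\<integral>\<^sup>+ p. F (True, p) \<partial>(A \<Otimes>\<^sub>M R)) + (\<integral>\<^sup>+ p. F (False, p) \<partial>(A \<Otimes>\<^sub>M R))"
      by (simp add: UNIV_bool)
    finally show ?thesis .
  qed
  have int1: "(\<integral>\<^sup>+ p. G (fst p) \<partial>(A \<Otimes>\<^sub>M R)) = integral\<^sup>N A G" if [measurable]: "G \<in> borel_measurable A" for G
  proof -
    have "(\<integral>\<^sup>+ p. G (fst p) \<partial>(A \<Otimes>\<^sub>M R)) = (\<integral>\<^sup>+ x. \<integral>\<^sup>+ y. G x \<partial>R \<partial>A)"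
      using R.nn_integral_fst[of "\<lambda>p. G (fst p)" A] by simp
    also have "\<dots> = integral\<^sup>N A G" by (simp add: R.emeasure_space_1)
    finally show ?thesis .
  qed
  have int2: "(\<integral>\<^sup>+ p. G (snd p) \<partial>(A \<Otimes>\<^sub>M R)) = integral\<^sup>N R G" if [measurable]: "G \<in> borel_measurable R" for G
  proof -
    have "(\<integral>\<^sup>+ p. G (snd p) \<partial>(A \<Otimes>\<^sub>M R)) = (\<integral>\<^sup>+ y. \<integral>\<^sup>+ x. G y \<partial>A \<partial>R)"
      using AR.nn_integral_snd[of "\<lambda>p. G (snd p)"] by simp
    also have "\<dots> = integral\<^sup>N R G" by (simp add: A.emeasure_space_1)
    finally show ?thesis .
  qed

  have dens_prob: "prob_space (density S wt)"
  proof (rule prob_spaceI)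
    have "emeasure (density S wt) (space (density S wt)) = (\<integral>\<^sup>+ p. wt p \<partial>S)"
      by (simp add: emeasure_density nn_integral_density[symmetric])
    also have "\<dots> = ennreal \<kappa> + ennreal (1-\<kappa>)"
      by (subst intS[OF wt_meas]) (simp add: wt_def prob_space.emeasure_space_1[OF pAR])
    also have "\<dots> = 1" using k by (simp add: ennreal_plus[symmetric] del: ennreal_plus)
    finally show "emeasure (density S wt) (space (density S wt)) = 1" .
  qed
  interpret DS: prob_space "density S wt" by (rule dens_prob)
  have intg: "integral\<^sup>N \<gamma> F = ennreal \<kappa> * (\<integral>\<^sup>+ \<omega>. F (g \<omega>, g \<omega>) \<partial>A)
        + ennreal (1-\<kappa>) * (\<integral>\<^sup>+ p. F (g (fst p), g (snd p)) \<partial>(A \<Otimes>\<^sub>M R))"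
    if [measurable]: "F \<in> borel_measurable (T \<Otimes>\<^sub>M T)" for F
  proof -
    have "integral\<^sup>N \<gamma> F = (\<integral>\<^sup>+ p. F (h p) \<partial>density S wt)"
      unfolding \<gamma>_def by (rule nn_integral_distr) simp_all
    also have "\<dots> = (\<integral>\<^sup>+ p. wt p * F (h p) \<partial>S)"
      by (rule nn_integral_density) simp_all
    also have "\<dots> = (\<integral>\<^sup>+ p. ennreal \<kappa> * F (g (fst p), g (fst p)) \<partial>(A \<Otimes>\<^sub>M R))
        + (\<integral>\<^sup>+ p. ennreal (1-\<kappa>) * F (g (fst p), g (snd p)) \<partial>(A \<Otimes>\<^sub>M R))"
    proof -
      have m: "(\<lambda>p. wt p * F (h p)) \<in> borel_measurable S"
        using wt_meas measurable_compose[OF h_meas that] by (rule borel_measurable_times_ennreal)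
      show ?thesis by (subst intS[OF m]) (simp add: wt_def h_def)
    qed
    also have "\<dots> = ennreal \<kappa> * (\<integral>\<^sup>+ \<omega>. F (g \<omega>, g \<omega>) \<partial>A)
        + ennreal (1-\<kappa>) * (\<integral>\<^sup>+ p. F (g (fst p), g (snd p)) \<partial>(A \<Otimes>\<^sub>M R))"
    proof -
      have m2: "(\<lambda>\<omega>. F (g \<omega>, g \<omega>)) \<in> borel_measurable A"
        by (rule measurable_compose[OF measurable_Pair[OF g g] that])
      show ?thesis by (simp add: nn_integral_cmult int1[OF m2])
    qed
    finally show ?thesis .
  qed
  have spR: "space R = space A" using sR by (rule sets_eq_imp_space_eq)
  have spQ: "space QB = space A" using sQ by (rule sets_eq_imp_space_eq)
  have indA: "(\<integral>\<^sup>+ \<omega>. indicator X (g \<omega>) \<partial>A) = emeasure A (g -` X \<inter> space A)" if X: "X \<in> sets T" for X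
  proof -
    have "(\<integral>\<^sup>+ \<omega>. indicator X (g \<omega>) \<partial>A) = (\<integral>\<^sup>+ \<omega>. indicator (g -` X \<inter> space A) \<omega> \<partial>A)"
      by (rule nn_integral_cong) (simp split: split_indicator)
    also have "\<dots> = emeasure A (g -` X \<inter> space A)" using X g by (simp add: measurable_sets)
    finally show ?thesis .
  qed
  have indR: "(\<integral>\<^sup>+ \<omega>. indicator X (g \<omega>) \<partial>R) = emeasure R (g -` X \<inter> space A)" if X: "X \<in> sets T" for X
  proof -
    have "(\<integral>\<^sup>+ \<omega>. indicator X (g \<omega>) \<partial>R) = (\<integral>\<^sup>+ \<omega>. indicator (g -` X \<inter> space A) \<omega> \<partial>R)"
      by (rule nn_integral_cong) (simp add: spR split: split_indicator)
    also have "\<dots> = emeasure R (g -` X \<inter> space A)" using X g sR by (simp add: measurable_sets)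
    finally show ?thesis .
  qed
  have sg: "sets \<gamma> = sets (T \<Otimes>\<^sub>M T)" unfolding \<gamma>_def by simp
  have emfst: "emeasure (distr \<gamma> M' fst) X = (\<integral>\<^sup>+ y. indicator X (fst y) \<partial>\<gamma>)"
    if sM: "sets M' = sets T" and X: "X \<in> sets T" for M' X
  proof -
    have fm: "fst \<in> measurable \<gamma> M'"
      unfolding measurable_cong_sets[OF sg sM] by (rule measurable_fst)
    have "emeasure (distr \<gamma> M' fst) X = (\<integral>\<^sup>+ x. indicator X x \<partial>distr \<gamma> M' fst)"
      using X sM by simp
    also have "\<dots> = (\<integral>\<^sup>+ y. indicator X (fst y) \<partial>\<gamma>)"
      by (rule nn_integral_distr[OF fm]) (use X sM in simp)
    finally show ?thesis .
  qed
  have emsnd: "emeasure (distr \<gamma> M' snd) X = (\<integral>\<^sup>+ y. indicator X (snd y) \<partial>\<gamma>)"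
    if sM: "sets M' = sets T" and X: "X \<in> sets T" for M' X
  proof -
    have fm: "snd \<in> measurable \<gamma> M'"
      unfolding measurable_cong_sets[OF sg sM] by (rule measurable_snd)
    have "emeasure (distr \<gamma> M' snd) X = (\<integral>\<^sup>+ x. indicator X x \<partial>distr \<gamma> M' snd)"
      using X sM by simp
    also have "\<dots> = (\<integral>\<^sup>+ y. indicator X (snd y) \<partial>\<gamma>)"
      by (rule nn_integral_distr[OF fm]) (use X sM in simp)
    finally show ?thesis .
  qed
  have marg1: "distr \<gamma> (distr A T g) fst = distr A T g"
  proof (rule measure_eqI)
    show "sets (distr \<gamma> (distr A T g) fst) = sets (distr A T g)" by simp
    fix X assume "X \<in> sets (distr \<gamma> (distr A T g) fst)"
    then have X[measurable]: "X \<in> sets T" by simp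
    have "emeasure (distr \<gamma> (distr A T g) fst) X = (\<integral>\<^sup>+ y. indicator X (fst y) \<partial>\<gamma>)"
      by (rule emfst) (simp_all add: X)
    also have "\<dots> = ennreal \<kappa> * (\<integral>\<^sup>+ \<omega>. indicator X (g \<omega>) \<partial>A)
        + ennreal (1-\<kappa>) * (\<integral>\<^sup>+ p. indicator X (g (fst p)) \<partial>(A \<Otimes>\<^sub>M R))"
      by (subst intg) simp_all
    also have "\<dots> = (ennreal \<kappa> + ennreal (1-\<kappa>)) * (\<integral>\<^sup>+ \<omega>. indicator X (g \<omega>) \<partial>A)"
      by (subst int1) (simp_all add: distrib_right)
    also have "\<dots> = emeasure A (g -` X \<inter> space A)"
      using k by (simp add: ennreal_plus[symmetric] indA del: ennreal_plus)
    also have "\<dots> = emeasure (distr A T g) X" by (simp add: emeasure_distr)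
    finally show "emeasure (distr \<gamma> (distr A T g) fst) X = emeasure (distr A T g) X" .
  qed
  have gQ: "g \<in> measurable QB T" using g unfolding measurable_cong_sets[OF sQ refl] .
  have marg2: "distr \<gamma> (distr QB T g) snd = distr QB T g"
  proof (rule measure_eqI)
    show "sets (distr \<gamma> (distr QB T g) snd) = sets (distr QB T g)" by simp
    fix X assume "X \<in> sets (distr \<gamma> (distr QB T g) snd)"
    then have X[measurable]: "X \<in> sets T" by simp
    have Fm: "(\<lambda>y. indicator X (snd y) :: ennreal) \<in> borel_measurable (T \<Otimes>\<^sub>M T)"
      by (rule measurable_compose[OF measurable_snd borel_measurable_indicator[OF X]])
    have Gm: "(\<lambda>\<omega>. indicator X (g \<omega>) :: ennreal) \<in> borel_measurable R"
      by (rule measurable_compose[OF gR borel_measurable_indicator[OF X]])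
    have set: "g -` X \<inter> space A \<in> sets A" using g X by (rule measurable_sets)
    have "emeasure (distr \<gamma> (distr QB T g) snd) X = (\<integral>\<^sup>+ y. indicator X (snd y) \<partial>\<gamma>)"
      by (rule emsnd) (simp_all add: X)
    also have "\<dots> = ennreal \<kappa> * (\<integral>\<^sup>+ \<omega>. indicator X (g \<omega>) \<partial>A)
        + ennreal (1-\<kappa>) * (\<integral>\<^sup>+ p. indicator X (g (snd p)) \<partial>(A \<Otimes>\<^sub>M R))"
      by (subst intg[OF Fm]) simp
    also have "\<dots> = ennreal \<kappa> * emeasure A (g -` X \<inter> space A) + ennreal (1-\<kappa>) * emeasure R (g -` X \<inter> space A)"
      by (simp add: int2[OF Gm] indA[OF X] indR[OF X])
    also have "\<dots> = emeasure QB (g -` X \<inter> space A)" by (rule dec[OF set, symmetric])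
    also have "\<dots> = emeasure (distr QB T g) X" using gQ X by (simp add: emeasure_distr spQ)
    finally show "emeasure (distr \<gamma> (distr QB T g) snd) X = emeasure (distr QB T g) X" .
  qed
  have Dnn: "0 \<le> D"
  proof -
    obtain \<omega> where "\<omega> \<in> space A" using A.not_empty by blast
    then show ?thesis using dD[of \<omega> \<omega>] d0[of \<omega>] by simp
  qed
  have cost: "(\<integral>\<^sup>+ w. ennreal (d (fst w) (snd w)) \<partial>\<gamma>) \<le> ennreal ((1-\<kappa>)*D)"
  proof -
    have Fm: "(\<lambda>w. ennreal (d (fst w) (snd w))) \<in> borel_measurable (T \<Otimes>\<^sub>M T)"
      by (rule measurable_compose[OF dmeas measurable_ennreal])
    have "(\<integral>\<^sup>+ w. ennreal (d (fst w) (snd w)) \<partial>\<gamma>) = ennreal \<kappa> * (\<integral>\<^sup>+ \<omega>. ennreal (d (g \<omega>) (g \<omega>)) \<partial>A)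
        + ennreal (1-\<kappa>) * (\<integral>\<^sup>+ p. ennreal (d (g (fst p)) (g (snd p))) \<partial>(A \<Otimes>\<^sub>M R))"
      by (subst intg[OF Fm]) simp
    also have "(\<integral>\<^sup>+ \<omega>. ennreal (d (g \<omega>) (g \<omega>)) \<partial>A) = 0"
      by (rule nn_integral_zero') (simp add: AE_I2 d0)
    also have "(\<integral>\<^sup>+ p. ennreal (d (g (fst p)) (g (snd p))) \<partial>(A \<Otimes>\<^sub>M R)) \<le> (\<integral>\<^sup>+ p. ennreal D \<partial>(A \<Otimes>\<^sub>M R))"
      by (rule nn_integral_mono) (auto simp: space_pair_measure spR intro!: dD ennreal_leI)
    also have "(\<integral>\<^sup>+ p. ennreal D \<partial>(A \<Otimes>\<^sub>M R)) = ennreal D"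
      by (simp add: prob_space.emeasure_space_1[OF pAR])
    finally have "(\<integral>\<^sup>+ w. ennreal (d (fst w) (snd w)) \<partial>\<gamma>) \<le> ennreal (1-\<kappa>) * ennreal D"
      by (simp add: mult_left_mono)
    also have "\<dots> = ennreal ((1-\<kappa>)*D)" using k Dnn by (simp add: ennreal_mult)
    finally show ?thesis .
  qed
  have coup: "\<gamma> \<in> couplings (distr A T g) (distr QB T g)"
    unfolding couplings_def
  proof (intro CollectI conjI)
    show "sets \<gamma> = sets (distr A T g \<Otimes>\<^sub>M distr QB T g)"
      unfolding sg by (rule sets_pair_measure_cong) simp_all
    show "prob_space \<gamma>" unfolding \<gamma>_def by (rule DS.prob_space_distr) (simp add: h_meas)
  qed (fact marg1, fact marg2)
  show ?thesis unfolding wasserstein1_def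
    by (rule INF_lower2[where f="\<lambda>\<gamma>. \<integral>\<^sup>+ w. ennreal (d (fst w) (snd w)) \<partial>\<gamma>", OF coup cost])
qed
lemma ln_bound:
  fixes y :: real assumes y: "0 \<le> y" "y < 1"
  shows "2 * y^2 \<le> - ln (1 - y)"
proof -
  have "(\<lambda>x. - ln (1 - x) - 2 * x^2) 0 \<le> (\<lambda>x. - ln (1 - x) - 2 * x^2) y"
  proof (rule DERIV_nonneg_imp_nondecreasing[OF y(1)])
    fix x assume x: "0 \<le> x" "x \<le> y"
    then have x1: "x < 1" using y by simp
    have "DERIV (\<lambda>x. - ln (1 - x) - 2 * x^2) x :> (1 / (1 - x) - 4 * x)"
      using x1 by (auto intro!: derivative_eq_intros simp: field_simps)
    moreover have "1 / (1 - x) - 4 * x \<ge> 0"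
    proof -
      have "4 * x * (1 - x) \<le> 1" using sum_squares_ge_zero[of "2*x-1" 0] by (simp add: power2_eq_square algebra_simps)
      then have "4 * x \<le> 1 / (1 - x)" using x1 by (simp add: field_simps)
      then show ?thesis by simp
    qed
    ultimately show "\<exists>d. DERIV (\<lambda>x. - ln (1 - x) - 2 * x^2) x :> d \<and> 0 \<le> d" by blast
  qed
  then show ?thesis by simp
qed

lemma gamma_bound:
  fixes G :: real assumes G: "1 \<le> G"
  shows "1 - 1 / G^2 \<le> sqrt (ln G)"
proof -
  define y where "y = 1 - 1 / G^2"
  have G2: "1 \<le> G^2" using G by (simp add: one_le_power)
  have y0: "0 \<le> y" unfolding y_def using G2 by (simp add: divide_le_eq_1)
  have y1: "y < 1" unfolding y_def using G by simp
  have "1 - y = 1 / G^2" unfolding y_def by simp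
  then have "ln (1 - y) = - 2 * ln G" using G by (simp add: ln_div ln_realpow)
  then have "y^2 \<le> ln G" using ln_bound[OF y0 y1] by simp
  then have "y \<le> sqrt (ln G)" using y0 by (simp add: real_le_rsqrt)
  then show ?thesis unfolding y_def .
qed
lemma ratio_bound:
  fixes p e en ph phn Gt Gz :: real
  assumes p: "0 \<le> p" and pos: "0 < e" "0 < en" "0 < ph" "0 < phn" and G: "1 \<le> Gt" "1 \<le> Gz"
    and r1: "1/Gt \<le> en/e" "en/e \<le> Gt" and r2: "1/Gz \<le> phn/ph" "phn/ph \<le> Gz"
  shows "p/(Gt*Gz) \<le> 1/(phn*en) * (ph*e*p)" and "1/(phn*en) * (ph*e*p) \<le> (Gt*Gz)*p"
proof -
  define uu where "uu = en/e"
  define vv where "vv = phn/ph"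
  have u0: "0 < uu" "0 < vv" unfolding uu_def vv_def using pos by simp_all
  have eq: "1/(phn*en) * (ph*e*p) = p / (uu * vv)" unfolding uu_def vv_def using pos by (simp add: field_simps)
  have uv1: "uu * vv \<le> Gt*Gz" using r1 r2 u0 unfolding uu_def[symmetric] vv_def[symmetric] by (intro mult_mono) auto
  have uv2: "1/(Gt*Gz) \<le> uu * vv"
  proof -
    have "(1/Gt)*(1/Gz) \<le> uu * vv" using r1 r2 G u0 unfolding uu_def[symmetric] vv_def[symmetric] by (intro mult_mono) auto
    then show ?thesis by simp
  qed
  show "p/(Gt*Gz) \<le> 1/(phn*en) * (ph*e*p)" unfolding eq
  proof (rule divide_left_mono[OF uv1 p])
    have "0 < Gt*Gz" using G by simp
    moreover have "0 < uu * vv" using u0 by simp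
    ultimately show "0 < Gt * Gz * (uu * vv)" by (rule mult_pos_pos)
  qed
  have GG: "0 < Gt*Gz" using G by simp
  have uvp: "0 < uu * vv" using u0 by simp
  have "1 \<le> uu * vv * (Gt*Gz)" using uv2 by (simp only: pos_divide_le_eq[OF GG])
  then have "1 * p \<le> uu * vv * (Gt*Gz) * p" by (rule mult_right_mono[OF _ p])
  then have "p \<le> (Gt*Gz)*p*(uu * vv)" by (simp add: ac_simps)
  then have "p / (uu * vv) \<le> (Gt*Gz)*p" by (simp only: pos_divide_le_eq[OF uvp])
  then show "1/(phn*en) * (ph*e*p) \<le> (Gt*Gz)*p" unfolding eq .
qed
lemma int_marg:
  fixes F :: "'a \<times> 'b \<Rightarrow> real"
  assumes N: "sigma_finite_measure N"
    and Fm: "F \<in> borel_measurable (M \<Otimes>\<^sub>M N)"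
    and nn: "\<And>p. 0 \<le> F p"
    and tot: "(\<integral>\<^sup>+ x. \<integral>\<^sup>+ y. ennreal (F (x,y)) \<partial>N \<partial>M) = 1"
  shows "AE x in M. integrable N (\<lambda>y. F (x,y))"
    and "AE x in M. (\<integral>\<^sup>+ y. ennreal (F (x,y)) \<partial>N) = ennreal (\<integral> y. F (x,y) \<partial>N)"
    and "(\<integral>\<^sup>+ x. ennreal (\<integral> y. F (x,y) \<partial>N) \<partial>M) = 1"
proof -
  interpret N: sigma_finite_measure N by fact
  have Fe: "(\<lambda>p. ennreal (F p)) \<in> borel_measurable (M \<Otimes>\<^sub>M N)"
    by (rule measurable_compose[OF Fm measurable_ennreal])
  have Fxm: "(\<lambda>x. \<integral>\<^sup>+ y. ennreal (F (x,y)) \<partial>N) \<in> borel_measurable M"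
    using N.borel_measurable_nn_integral_fst[OF Fe] by simp
  have fin: "AE x in M. (\<integral>\<^sup>+ y. ennreal (F (x,y)) \<partial>N) \<noteq> \<infinity>"
    by (rule nn_integral_PInf_AE[OF Fxm]) (simp add: tot)
  have A: "AE x in M. integrable N (\<lambda>y. F (x,y)) \<and> (\<integral>\<^sup>+ y. ennreal (F (x,y)) \<partial>N) = ennreal (\<integral> y. F (x,y) \<partial>N)"
    using fin
  proof (rule AE_mp[OF _ AE_I2], intro impI)
    fix x assume x: "x \<in> space M" and f: "(\<integral>\<^sup>+ y. ennreal (F (x,y)) \<partial>N) \<noteq> \<infinity>"
    have m: "(\<lambda>y. F (x,y)) \<in> borel_measurable N" by (rule measurable_Pair2[OF Fm x])
    have i: "integrable N (\<lambda>y. F (x,y))"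
      by (rule integrableI_nonneg[OF m]) (use f nn in \<open>simp_all add: top.not_eq_extremum\<close>)
    show "integrable N (\<lambda>y. F (x,y)) \<and> (\<integral>\<^sup>+ y. ennreal (F (x,y)) \<partial>N) = ennreal (\<integral> y. F (x,y) \<partial>N)"
      using i nn by (simp add: nn_integral_eq_integral)
  qed
  then show "AE x in M. integrable N (\<lambda>y. F (x,y))" by auto
  from A show B: "AE x in M. (\<integral>\<^sup>+ y. ennreal (F (x,y)) \<partial>N) = ennreal (\<integral> y. F (x,y) \<partial>N)" by auto
  have "(\<integral>\<^sup>+ x. ennreal (\<integral> y. F (x,y) \<partial>N) \<partial>M) = (\<integral>\<^sup>+ x. \<integral>\<^sup>+ y. ennreal (F (x,y)) \<partial>N \<partial>M)"
    using B by (intro nn_integral_cong_AE) auto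
  then show "(\<integral>\<^sup>+ x. ennreal (\<integral> y. F (x,y) \<partial>N) \<partial>M) = 1" using tot by simp
qed
theorem theorem2:
  fixes \<mu> :: "'x measure"
    and f :: "'x \<Rightarrow> bool \<Rightarrow> real \<Rightarrow> real"
    and xt :: "'x \<Rightarrow> 'a" and xz :: "'x \<Rightarrow> 'b"
    and e e\<^sub>\<eta> :: "bool \<Rightarrow> 'a \<Rightarrow> real"
    and \<phi> \<phi>\<^sub>\<eta> :: "real \<Rightarrow> 'b \<Rightarrow> real"
    and \<Gamma>\<^sub>t \<Gamma>\<^sub>z :: real
    and \<Phi> :: "'x \<Rightarrow> 'r::euclidean_space"
    and Rs :: "'r set"
  assumes sf: "sigma_finite_measure \<mu>"
    and f_meas: "(\<lambda>(x, t, z). f x t z) \<in> borel_measurable (\<mu> \<Otimes>\<^sub>M tz_ref)"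
    and f_nonneg: "\<And>x t z. f x t z \<ge> 0"
    and f_supp: "\<And>x t z. z \<notin> {0..1} \<Longrightarrow> f x t z = 0"
    and f_prob: "(\<integral>\<^sup>+ w. ennreal ((\<lambda>(x, t, z). f x t z) w) \<partial>(\<mu> \<Otimes>\<^sub>M tz_ref)) = 1"
    and overlap: "\<And>x t z. px f x > 0 \<Longrightarrow> z \<in> {0..1} \<Longrightarrow> psi f x t z > 0"
    and factor: "\<And>x t z. px f x > 0 \<Longrightarrow> z \<in> {0..1} \<Longrightarrow>
                   psi f x t z = \<phi> z (xz x) * e t (xt x)"
    and e_norm: "\<And>x. px f x > 0 \<Longrightarrow> e True (xt x) + e False (xt x) = 1"
    and phi_norm: "\<And>x. px f x > 0 \<Longrightarrow> (\<integral>z\<in>{0..1}. \<phi> z (xz x) \<partial>lborel) = 1"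
    and e_meas: "\<And>t. (\<lambda>x. e t (xt x)) \<in> borel_measurable \<mu>"
    and e_eta_meas: "\<And>t. (\<lambda>x. e\<^sub>\<eta> t (xt x)) \<in> borel_measurable \<mu>"
    and phi_meas: "(\<lambda>(x, z). \<phi> z (xz x)) \<in> borel_measurable (\<mu> \<Otimes>\<^sub>M lborel)"
    and phi_eta_meas: "(\<lambda>(x, z). \<phi>\<^sub>\<eta> z (xz x)) \<in> borel_measurable (\<mu> \<Otimes>\<^sub>M lborel)"
    and e_eta_pos: "\<And>t a. e\<^sub>\<eta> t a > 0"
    and phi_eta_pos: "\<And>z b. \<phi>\<^sub>\<eta> z b > 0"
    and Gt: "\<Gamma>\<^sub>t \<ge> 1" and Gz: "\<Gamma>\<^sub>z \<ge> 1"
    and e_ratio: "\<And>x t. px f x > 0 \<Longrightarrow>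
                   1 / \<Gamma>\<^sub>t \<le> e\<^sub>\<eta> t (xt x) / e t (xt x) \<and> e\<^sub>\<eta> t (xt x) / e t (xt x) \<le> \<Gamma>\<^sub>t"
    and phi_ratio: "\<And>x z. px f x > 0 \<Longrightarrow> z \<in> {0..1} \<Longrightarrow>
                   1 / \<Gamma>\<^sub>z \<le> \<phi>\<^sub>\<eta> z (xz x) / \<phi> z (xz x) \<and> \<phi>\<^sub>\<eta> z (xz x) / \<phi> z (xz x) \<le> \<Gamma>\<^sub>z"
    and c_finite: "\<And>t z. integrable \<mu>
                   (\<lambda>x. (1 / (\<phi>\<^sub>\<eta> z (xz x) * e\<^sub>\<eta> t (xt x))) * cond_x \<mu> f x t z)"
    and Phi_inj: "inj \<Phi>"
    and Phi_meas: "\<Phi> \<in> borel_measurable \<mu>"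
    and Phi_range: "\<And>x. \<Phi> x \<in> Rs"
    and R_bounded: "bounded Rs"
  shows "wasserstein1 rep_cost
           (P_prod \<mu> f \<Phi>)
           (Q_joint \<mu> f (\<lambda>t z x. 1 / (\<phi>\<^sub>\<eta> z (xz x) * e\<^sub>\<eta> t (xt x))) \<Phi>)
         \<le> ennreal (diameter Rs * sqrt (ln \<Gamma>\<^sub>t + ln \<Gamma>\<^sub>z))"
  proof -
  interpret M: sigma_finite_measure \<mu> by (rule sf)
  have sfT: "sigma_finite_measure tz_ref" unfolding tz_ref_def
    by (intro sigma_finite_pair_measure sigma_finite_measure_count_space_finite lborel.sigma_finite_measure_axioms) simp
  interpret T: sigma_finite_measure tz_ref by (rule sfT)
  interpret PS: pair_sigma_finite \<mu> tz_ref ..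
  interpret PS': pair_sigma_finite tz_ref \<mu> ..
  define w where "w = (\<lambda>t z x. 1 / (\<phi>\<^sub>\<eta> z (xz x) * e\<^sub>\<eta> t (xt x)))"
  define G where "G = \<Gamma>\<^sub>t * \<Gamma>\<^sub>z"
  define F0 where "F0 = (\<lambda>p::'x \<times> bool \<times> real. f (fst p) (fst (snd p)) (snd (snd p)))"
  have fm: "F0 \<in> borel_measurable (\<mu> \<Otimes>\<^sub>M tz_ref)"
  proof -
    have "(\<lambda>(x, t, z). f x t z) = F0" unfolding F0_def by (simp add: split_beta fun_eq_iff)
    then show ?thesis using f_meas by simp
  qed
  have F0eq: "(\<lambda>(x, t, z). f x t z) = F0" unfolding F0_def by (simp add: split_beta fun_eq_iff)
  have sndT: "snd \<in> measurable tz_ref lborel" unfolding tz_ref_def by (rule measurable_snd)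
  have fstT: "fst \<in> measurable tz_ref (count_space UNIV)" unfolding tz_ref_def by (rule measurable_fst)
  have Fsw: "(\<lambda>p::(bool \<times> real) \<times> 'x. f (snd p) (fst (fst p)) (snd (fst p))) \<in> borel_measurable (tz_ref \<Otimes>\<^sub>M \<mu>)"
  proof -
    have "(\<lambda>p::(bool \<times> real) \<times> 'x. f (snd p) (fst (fst p)) (snd (fst p))) = F0 \<circ> (\<lambda>(x,y). (y, x))"
      unfolding F0_def by (simp add: fun_eq_iff split_beta)
    then show ?thesis using measurable_comp[OF measurable_pair_swap' fm] by simp
  qed
  have pxm: "px f \<in> borel_measurable \<mu>"
  proof -
    have "px f = (\<lambda>x. \<integral> tz. f x (fst tz) (snd tz) \<partial>tz_ref)" by (simp add: px_def fun_eq_iff)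
    moreover have "(\<lambda>x. \<integral> tz. f x (fst tz) (snd tz) \<partial>tz_ref) \<in> borel_measurable \<mu>"
      by (rule T.borel_measurable_lebesgue_integral) (use fm in \<open>simp add: F0_def split_beta'\<close>)
    ultimately show ?thesis by simp
  qed
  have ptzm: "(\<lambda>tz. ptz \<mu> f (fst tz) (snd tz)) \<in> borel_measurable tz_ref"
  proof -
    have "(\<lambda>tz. ptz \<mu> f (fst tz) (snd tz)) = (\<lambda>tz. \<integral> x. f x (fst tz) (snd tz) \<partial>\<mu>)" by (simp add: ptz_def fun_eq_iff)
    moreover have "(\<lambda>tz. \<integral> x. f x (fst tz) (snd tz) \<partial>\<mu>) \<in> borel_measurable tz_ref"
      by (rule M.borel_measurable_lebesgue_integral) (use Fsw in \<open>simp add: split_beta'\<close>)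
    ultimately show ?thesis by simp
  qed
  have sw: "(\<lambda>p. h (snd p, fst p)) \<in> borel_measurable (\<mu> \<Otimes>\<^sub>M tz_ref)"
    if "h \<in> borel_measurable (tz_ref \<Otimes>\<^sub>M \<mu>)" for h :: "(bool \<times> real) \<times> 'x \<Rightarrow> real"
  proof -
    have "(\<lambda>p. h (snd p, fst p)) = h \<circ> (\<lambda>(x,y). (y, x))" by (simp add: fun_eq_iff split_beta)
    then show ?thesis using measurable_comp[OF measurable_pair_swap' that] by simp
  qed
  have weta: "(\<lambda>p::(bool \<times> real) \<times> 'x. e\<^sub>\<eta> (fst (fst p)) (xt (snd p))) \<in> borel_measurable (tz_ref \<Otimes>\<^sub>M \<mu>)"
  proof -
    have eq: "(\<lambda>p::(bool \<times> real) \<times> 'x. e\<^sub>\<eta> (fst (fst p)) (xt (snd p))) =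
        (\<lambda>p. if fst (fst p) then e\<^sub>\<eta> True (xt (snd p)) else e\<^sub>\<eta> False (xt (snd p)))"
      by (simp add: fun_eq_iff)
    have c: "{p \<in> space (tz_ref \<Otimes>\<^sub>M \<mu>). fst (fst p)} \<in> sets (tz_ref \<Otimes>\<^sub>M \<mu>)"
    proof -
      have ff: "(\<lambda>p::(bool \<times> real) \<times> 'x. fst (fst p)) \<in> measurable (tz_ref \<Otimes>\<^sub>M \<mu>) (count_space UNIV)"
        by (rule measurable_compose[OF measurable_fst fstT])
      have "{p \<in> space (tz_ref \<Otimes>\<^sub>M \<mu>). fst (fst p)} = (\<lambda>p. fst (fst p)) -` {True} \<inter> space (tz_ref \<Otimes>\<^sub>M \<mu>)" by auto
      also have "\<dots> \<in> sets (tz_ref \<Otimes>\<^sub>M \<mu>)" by (rule measurable_sets[OF ff]) simp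
      finally show ?thesis .
    qed
    show ?thesis unfolding eq
      by (rule measurable_If[OF measurable_compose[OF measurable_snd e_eta_meas] measurable_compose[OF measurable_snd e_eta_meas] c])
  qed
  have phieta: "(\<lambda>p::(bool \<times> real) \<times> 'x. \<phi>\<^sub>\<eta> (snd (fst p)) (xz (snd p))) \<in> borel_measurable (tz_ref \<Otimes>\<^sub>M \<mu>)"
  proof -
    have m1: "(\<lambda>p::(bool \<times> real) \<times> 'x. (snd p, snd (fst p))) \<in> measurable (tz_ref \<Otimes>\<^sub>M \<mu>) (\<mu> \<Otimes>\<^sub>M lborel)"
      by (rule measurable_Pair[OF measurable_snd measurable_compose[OF measurable_fst sndT]])
    show ?thesis using measurable_comp[OF m1 phi_eta_meas] by (simp add: o_def)
  qed
  have Hsw: "(\<lambda>p. w (fst (fst p)) (snd (fst p)) (snd p) * cond_x \<mu> f (snd p) (fst (fst p)) (snd (fst p)))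
      \<in> borel_measurable (tz_ref \<Otimes>\<^sub>M \<mu>)"
    unfolding w_def cond_x_def
    by (intro borel_measurable_times borel_measurable_divide measurable_const borel_measurable_times phieta weta Fsw
          measurable_compose[OF measurable_fst ptzm]) simp
  have cnm: "(\<lambda>tz. cnorm \<mu> f w (fst tz) (snd tz)) \<in> borel_measurable tz_ref"
  proof -
    have "(\<lambda>tz. cnorm \<mu> f w (fst tz) (snd tz)) = (\<lambda>tz. \<integral> x. w (fst tz) (snd tz) x * cond_x \<mu> f x (fst tz) (snd tz) \<partial>\<mu>)"
      by (simp add: cnorm_def fun_eq_iff)
    moreover have "(\<lambda>tz. \<integral> x. w (fst tz) (snd tz) x * cond_x \<mu> f x (fst tz) (snd tz) \<partial>\<mu>) \<in> borel_measurable tz_ref"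
      by (rule M.borel_measurable_lebesgue_integral) (use Hsw in \<open>simp add: split_beta'\<close>)
    ultimately show ?thesis by simp
  qed
  define a0 where "a0 = (\<lambda>p::'x \<times> bool \<times> real. px f (fst p) * ptz \<mu> f (fst (snd p)) (snd (snd p)))"
  define b0 where "b0 = (\<lambda>p::'x \<times> bool \<times> real. q_cond \<mu> f w (fst p) (fst (snd p)) (snd (snd p)) * ptz \<mu> f (fst (snd p)) (snd (snd p)))"
  have a0m: "a0 \<in> borel_measurable (\<mu> \<Otimes>\<^sub>M tz_ref)" unfolding a0_def
    by (intro borel_measurable_times measurable_compose[OF measurable_fst pxm] measurable_compose[OF measurable_snd ptzm])
  have b0m: "b0 \<in> borel_measurable (\<mu> \<Otimes>\<^sub>M tz_ref)"
  proof -
    have "b0 = (\<lambda>p. (w (fst (snd p)) (snd (snd p)) (fst p) * cond_x \<mu> f (fst p) (fst (snd p)) (snd (snd p)))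
          / cnorm \<mu> f w (fst (snd p)) (snd (snd p)) * ptz \<mu> f (fst (snd p)) (snd (snd p)))"
      unfolding b0_def q_cond_def by simp
    moreover have "\<dots> \<in> borel_measurable (\<mu> \<Otimes>\<^sub>M tz_ref)"
    proof (rule borel_measurable_times[OF borel_measurable_divide])
      show "(\<lambda>p. w (fst (snd p)) (snd (snd p)) (fst p) * cond_x \<mu> f (fst p) (fst (snd p)) (snd (snd p)))
          \<in> borel_measurable (\<mu> \<Otimes>\<^sub>M tz_ref)" using sw[OF Hsw] by simp
    qed (rule measurable_compose[OF measurable_snd cnm], rule measurable_compose[OF measurable_snd ptzm])
    ultimately show ?thesis by simp
  qed
  have F0nn: "\<And>p. 0 \<le> F0 p" unfolding F0_def using f_nonneg by simp
  have F0e: "(\<lambda>p. ennreal (F0 p)) \<in> borel_measurable (\<mu> \<Otimes>\<^sub>M tz_ref)"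
    by (rule measurable_compose[OF fm measurable_ennreal])
  have totnu: "(\<integral>\<^sup>+ p. ennreal (F0 p) \<partial>(\<mu> \<Otimes>\<^sub>M tz_ref)) = 1" using f_prob unfolding F0eq .
  have tot1: "(\<integral>\<^sup>+ x. \<integral>\<^sup>+ tz. ennreal (F0 (x,tz)) \<partial>tz_ref \<partial>\<mu>) = 1"
    using T.nn_integral_fst[OF F0e] totnu by simp
  have tot2: "(\<integral>\<^sup>+ tz. \<integral>\<^sup>+ x. ennreal (F0 (x,tz)) \<partial>\<mu> \<partial>tz_ref) = 1"
    using PS.nn_integral_snd[OF F0e] totnu by simp
  have pxI: "\<And>x. (\<integral> y. F0 (x,y) \<partial>tz_ref) = px f x" by (simp add: F0_def px_def split_beta')
  have ptzI: "\<And>tz. (\<integral> x. F0 (x,tz) \<partial>\<mu>) = ptz \<mu> f (fst tz) (snd tz)" by (simp add: F0_def ptz_def)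
  note IM = int_marg[OF sfT fm F0nn tot1, unfolded pxI]
  have Fsw': "(\<lambda>p. F0 (snd p, fst p)) \<in> borel_measurable (tz_ref \<Otimes>\<^sub>M \<mu>)" using Fsw by (simp add: F0_def)
  have nnsw: "\<And>p. 0 \<le> F0 (snd p, fst p)" using F0nn by simp
  have tot2': "(\<integral>\<^sup>+ x. \<integral>\<^sup>+ y. ennreal (F0 (snd (x, y), fst (x, y))) \<partial>\<mu> \<partial>tz_ref) = 1" using tot2 by simp
  note IT0 = int_marg[OF sf Fsw' nnsw tot2']
  have IT1: "AE tz in tz_ref. integrable \<mu> (\<lambda>x. F0 (x, tz))" using IT0(1) by simp
  have IT2: "AE tz in tz_ref. (\<integral>\<^sup>+ x. ennreal (F0 (x, tz)) \<partial>\<mu>) = ennreal (ptz \<mu> f (fst tz) (snd tz))"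
    using IT0(2) by (simp add: ptzI)
  have IT3: "(\<integral>\<^sup>+ tz. ennreal (ptz \<mu> f (fst tz) (snd tz)) \<partial>tz_ref) = 1"
    using IT0(3) by (simp add: ptzI)
  have px_nn: "\<And>x. 0 \<le> px f x" unfolding px_def by (rule integral_nonneg_AE) (simp add: f_nonneg)
  have ptz_nn: "\<And>t z. 0 \<le> ptz \<mu> f t z" unfolding ptz_def by (rule integral_nonneg_AE) (simp add: f_nonneg)
  have px_int: "integrable \<mu> (px f)" and px_int1: "(\<integral> x. px f x \<partial>\<mu>) = 1"
    using nn_integral_eq_integrable[OF pxm AE_I2[OF px_nn], of 1] IM(3) by simp_all
  define Z0 where "Z0 = {x \<in> space \<mu>. px f x = 0}"
  have Z0s: "Z0 \<in> sets \<mu>" unfolding Z0_def by (rule borel_measurable_eq[OF pxm measurable_const]) simp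
  define H where "H = (\<lambda>p. ennreal (F0 p) * indicator Z0 (fst p))"
  have Hm: "H \<in> borel_measurable (\<mu> \<Otimes>\<^sub>M tz_ref)" unfolding H_def
    by (rule borel_measurable_times_ennreal[OF F0e measurable_compose[OF measurable_fst borel_measurable_indicator[OF Z0s]]])
  have "(\<integral>\<^sup>+ x. \<integral>\<^sup>+ tz. H (x,tz) \<partial>tz_ref \<partial>\<mu>) = (\<integral>\<^sup>+ x. (\<integral>\<^sup>+ tz. ennreal (F0 (x,tz)) \<partial>tz_ref) * indicator Z0 x \<partial>\<mu>)"
  proof (rule nn_integral_cong)
    fix x assume x: "x \<in> space \<mu>"
    have m: "(\<lambda>tz. ennreal (F0 (x,tz))) \<in> borel_measurable tz_ref" by (rule measurable_Pair2[OF F0e x])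
    show "(\<integral>\<^sup>+ tz. H (x,tz) \<partial>tz_ref) = (\<integral>\<^sup>+ tz. ennreal (F0 (x,tz)) \<partial>tz_ref) * indicator Z0 x"
      unfolding H_def by (simp add: nn_integral_multc[OF m])
  qed
  also have "\<dots> = (\<integral>\<^sup>+ x. 0 \<partial>\<mu>)"
    using IM(2) by (intro nn_integral_cong_AE) (auto simp: Z0_def split: split_indicator)
  finally have "(\<integral>\<^sup>+ tz. \<integral>\<^sup>+ x. H (x,tz) \<partial>\<mu> \<partial>tz_ref) = 0"
    using T.nn_integral_fst[OF Hm] PS.nn_integral_snd[OF Hm] by simp
  moreover have Hsm: "(\<lambda>tz. \<integral>\<^sup>+ x. H (x,tz) \<partial>\<mu>) \<in> borel_measurable tz_ref"
  proof -
    have "(\<lambda>p. H (snd p, fst p)) \<in> borel_measurable (tz_ref \<Otimes>\<^sub>M \<mu>)"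
    proof -
      have "(\<lambda>p. H (snd p, fst p)) = H \<circ> (\<lambda>(x,y). (y, x))" by (simp add: fun_eq_iff split_beta)
      then show ?thesis using measurable_comp[OF measurable_pair_swap' Hm] by simp
    qed
    then show ?thesis using M.borel_measurable_nn_integral_fst[of "\<lambda>p. H (snd p, fst p)" tz_ref] by simp
  qed
  ultimately have "AE tz in tz_ref. (\<integral>\<^sup>+ x. H (x,tz) \<partial>\<mu>) = 0" by (simp add: nn_integral_0_iff_AE)
  then have Zae: "AE tz in tz_ref. AE x in \<mu>. px f x = 0 \<longrightarrow> f x (fst tz) (snd tz) = 0"
  proof (rule AE_mp[OF _ AE_I2], intro impI)
    fix tz assume tz: "tz \<in> space tz_ref" and h0: "(\<integral>\<^sup>+ x. H (x,tz) \<partial>\<mu>) = 0"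
    have m: "(\<lambda>x. H (x,tz)) \<in> borel_measurable \<mu>" by (rule measurable_Pair1[OF Hm tz])
    from h0 have "AE x in \<mu>. H (x,tz) = 0" by (simp add: nn_integral_0_iff_AE[OF m])
    then show "AE x in \<mu>. px f x = 0 \<longrightarrow> f x (fst tz) (snd tz) = 0"
    proof (rule AE_mp[OF _ AE_I2], intro impI)
      fix x assume x: "x \<in> space \<mu>" and "H (x,tz) = 0" and "px f x = 0"
      then have "ennreal (F0 (x,tz)) = 0" by (simp add: H_def Z0_def)
      then show "f x (fst tz) (snd tz) = 0" using F0nn[of "(x,tz)"] by (simp add: F0_def)
    qed
  qed
  have fac: "f x t z = \<phi> z (xz x) * e t (xt x) * px f x \<and> 0 < e t (xt x) \<and> 0 < \<phi> z (xz x)"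
    if px: "px f x > 0" and z: "z \<in> {0..1}" for x t z
  proof -
    have z0: "(0::real) \<in> {0..1}" by simp
    have p0: "0 < \<phi> 0 (xz x) * e tt (xt x)" for tt
      using overlap[OF px z0, of tt] factor[OF px z0, of tt] by simp
    have esum: "e True (xt x) + e False (xt x) = 1" by (rule e_norm[OF px])
    have epos: "0 < e tt (xt x)" for tt
    proof (cases "0 < \<phi> 0 (xz x)")
      case True
      then show ?thesis using p0[of tt] by (simp add: zero_less_mult_iff)
    next
      case False
      then have "e True (xt x) < 0" "e False (xt x) < 0" using p0[of True] p0[of False]
        by (auto simp: zero_less_mult_iff)
      then show ?thesis using esum by simp
    qed
    have pz: "0 < \<phi> z (xz x) * e t (xt x)" using overlap[OF px z, of t] factor[OF px z, of t] by simp
    have phipos: "0 < \<phi> z (xz x)" using pz epos[of t] by (simp add: zero_less_mult_iff)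
    have "f x t z = psi f x t z * px f x" using px by (simp add: psi_def)
    then have "f x t z = \<phi> z (xz x) * e t (xt x) * px f x" using factor[OF px z, of t] by simp
    then show ?thesis using epos phipos by simp
  qed
  have Gge: "1 \<le> G" unfolding G_def using Gt Gz by (metis mult_mono' mult_1 zero_le_one)
  have wfb: "px f x / G \<le> w t z x * f x t z \<and> w t z x * f x t z \<le> G * px f x"
    if px: "px f x > 0" and z: "z \<in> {0..1}" for x t z
  proof -
    note fx = fac[OF px z]
    have "px f x/(\<Gamma>\<^sub>t*\<Gamma>\<^sub>z) \<le> 1/(\<phi>\<^sub>\<eta> z (xz x)*e\<^sub>\<eta> t (xt x)) * (\<phi> z (xz x)*e t (xt x)*px f x)"
     and "1/(\<phi>\<^sub>\<eta> z (xz x)*e\<^sub>\<eta> t (xt x)) * (\<phi> z (xz x)*e t (xt x)*px f x) \<le> (\<Gamma>\<^sub>t*\<Gamma>\<^sub>z)*px f x"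
      using ratio_bound[OF less_imp_le[OF px] _ e_eta_pos _ phi_eta_pos Gt Gz] fx e_ratio[OF px] phi_ratio[OF px z]
      by auto
    then show ?thesis using fx unfolding w_def G_def by simp
  qed
  have w_pos: "\<And>t z x. 0 < w t z x" unfolding w_def using e_eta_pos phi_eta_pos by simp
  define I where "I = (\<lambda>t z. \<integral> x. w t z x * f x t z \<partial>\<mu>)"
  have pertz: "(AE x in \<mu>. \<kappa> * a0 (x,(t,z)) \<le> b0 (x,(t,z)))
      \<and> (\<integral>\<^sup>+ x. ennreal (b0 (x,(t,z))) \<partial>\<mu>) = ennreal (ptz \<mu> f t z)"
    if Zt: "AE x in \<mu>. px f x = 0 \<longrightarrow> f x t z = 0" and k0: "0 \<le> \<kappa>" and k1: "\<kappa> \<le> 1 / G^2" for t z \<kappa>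
  proof (cases "ptz \<mu> f t z = 0")
    case True
    then have "\<And>x. b0 (x,(t,z)) = 0" "\<And>x. a0 (x,(t,z)) = 0" by (simp_all add: a0_def b0_def)
    then show ?thesis using True by simp
  next
    case False
    then have pp: "0 < ptz \<mu> f t z" using ptz_nn[of t z] by simp
    have z: "z \<in> {0..1}"
    proof (rule ccontr)
      assume "z \<notin> {0..1}"
      then have "ptz \<mu> f t z = 0" by (simp add: ptz_def f_supp)
      then show False using False by simp
    qed
    have wfeq: "\<And>x. w t z x * f x t z = ptz \<mu> f t z * (1 / (\<phi>\<^sub>\<eta> z (xz x) * e\<^sub>\<eta> t (xt x)) * cond_x \<mu> f x t z)"
      using pp by (simp add: w_def cond_x_def)
    have wfi: "integrable \<mu> (\<lambda>x. w t z x * f x t z)"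
      unfolding wfeq by (rule integrable_mult_right) (rule c_finite)
    have wfae: "AE x in \<mu>. px f x / G \<le> w t z x * f x t z \<and> w t z x * f x t z \<le> G * px f x"
      using Zt
    proof (rule AE_mp[OF _ AE_I2], intro impI)
      fix x assume x: "x \<in> space \<mu>" and zz: "px f x = 0 \<longrightarrow> f x t z = 0"
      show "px f x / G \<le> w t z x * f x t z \<and> w t z x * f x t z \<le> G * px f x"
      proof (cases "px f x = 0")
        case True then show ?thesis using zz by simp
      next
        case False then have "px f x > 0" using px_nn[of x] by simp
        then show ?thesis using wfb[OF _ z] by blast
      qed
    qed
    have Ilo: "1 / G \<le> I t z"
    proof -
      have "(\<integral> x. px f x / G \<partial>\<mu>) \<le> I t z" unfolding I_def
        by (rule integral_mono_AE[OF _ wfi]) (use px_int wfae in auto)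
      then show ?thesis using px_int1 by simp
    qed
    have Ihi: "I t z \<le> G"
    proof -
      have "I t z \<le> (\<integral> x. G * px f x \<partial>\<mu>)" unfolding I_def
        by (rule integral_mono_AE[OF wfi]) (use px_int wfae in auto)
      then show ?thesis using px_int1 by simp
    qed
    have Gpos: "0 < G" using Gge by simp
    have Ipos: "0 < I t z" using Ilo Gpos by (smt (verit) divide_pos_pos)
    have cn: "cnorm \<mu> f w t z = I t z / ptz \<mu> f t z"
    proof -
      have "cnorm \<mu> f w t z = (\<integral> x. w t z x * f x t z / ptz \<mu> f t z \<partial>\<mu>)"
        by (simp add: cnorm_def cond_x_def)
      then show ?thesis unfolding I_def by simp
    qed
    have b0eq: "\<And>x. b0 (x,(t,z)) = w t z x * f x t z * (ptz \<mu> f t z / I t z)"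
      using pp Ipos by (simp add: b0_def q_cond_def cn cond_x_def field_simps)
    have key: "AE x in \<mu>. \<kappa> * a0 (x,(t,z)) \<le> b0 (x,(t,z))"
      using wfae
    proof (rule AE_mp[OF _ AE_I2], intro impI)
      fix x assume x: "x \<in> space \<mu>" and bb: "px f x / G \<le> w t z x * f x t z \<and> w t z x * f x t z \<le> G * px f x"
      have r0: "0 \<le> ptz \<mu> f t z / I t z" using pp Ipos by simp
      have "\<kappa> * a0 (x,(t,z)) \<le> (1/G^2) * (px f x * ptz \<mu> f t z)" unfolding a0_def
        using mult_right_mono[OF k1, of "px f x * ptz \<mu> f t z"] px_nn[of x] ptz_nn[of t z] by (simp add: mult.commute)
      also have "\<dots> = (px f x / G) * (ptz \<mu> f t z / G)" by (simp add: power2_eq_square)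
      also have "\<dots> \<le> (px f x / G) * (ptz \<mu> f t z / I t z)"
        using Ilo Ihi Ipos pp px_nn[of x] Gpos
        by (intro mult_left_mono divide_left_mono) (auto simp: field_simps)
      also have "\<dots> \<le> w t z x * f x t z * (ptz \<mu> f t z / I t z)"
        using bb r0 by (intro mult_right_mono) auto
      finally show "\<kappa> * a0 (x,(t,z)) \<le> b0 (x,(t,z))" unfolding b0eq .
    qed
    have mass: "(\<integral>\<^sup>+ x. ennreal (b0 (x,(t,z))) \<partial>\<mu>) = ennreal (ptz \<mu> f t z)"
    proof -
      have nnwf: "\<And>x. 0 \<le> w t z x * f x t z" using w_pos f_nonneg by (simp add: less_imp_le)
      have "(\<integral>\<^sup>+ x. ennreal (b0 (x,(t,z))) \<partial>\<mu>) = ennreal (\<integral> x. w t z x * f x t z * (ptz \<mu> f t z / I t z) \<partial>\<mu>)"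
        unfolding b0eq using wfi nnwf pp Ipos
        by (intro nn_integral_eq_integral) (auto intro!: integrable_mult_left)
      also have "(\<integral> x. w t z x * f x t z * (ptz \<mu> f t z / I t z) \<partial>\<mu>) = ptz \<mu> f t z"
        using Ipos unfolding I_def by simp
      finally show ?thesis .
    qed
    show ?thesis using key mass by simp
  qed
  let ?\<nu> = "\<mu> \<Otimes>\<^sub>M tz_ref"
  have a0nn: "\<And>p. 0 \<le> a0 p" unfolding a0_def using px_nn ptz_nn by simp
  have keynu: "AE p in ?\<nu>. \<kappa> * a0 p \<le> b0 p" if k0: "0 \<le> \<kappa>" and k1: "\<kappa> \<le> 1 / G^2" for \<kappa>
  proof -
    have "AE tz in tz_ref. AE x in \<mu>. \<kappa> * a0 (x,tz) \<le> b0 (x,tz)"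
    proof (rule AE_mp[OF Zae AE_I2], intro impI)
      fix tz assume "tz \<in> space tz_ref" "AE x in \<mu>. px f x = 0 \<longrightarrow> f x (fst tz) (snd tz) = 0"
      from pertz[OF this(2) k0 k1] show "AE x in \<mu>. \<kappa> * a0 (x,tz) \<le> b0 (x,tz)" by simp
    qed
    moreover have Ps: "{p \<in> space ?\<nu>. \<kappa> * a0 (fst p, snd p) \<le> b0 (fst p, snd p)} \<in> sets ?\<nu>"
      by (simp add: borel_measurable_le[OF borel_measurable_times[OF measurable_const a0m] b0m])
    ultimately have "AE x in \<mu>. AE tz in tz_ref. \<kappa> * a0 (x,tz) \<le> b0 (x,tz)"
      using PS.AE_commute[OF Ps] by simp
    then show ?thesis using PS.AE_pair_iff[OF Ps] by simp
  qed
  have b0m_e: "(\<lambda>p. ennreal (b0 p)) \<in> borel_measurable ?\<nu>" by (rule measurable_compose[OF b0m measurable_ennreal])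
  have a0m_e: "(\<lambda>p. ennreal (a0 p)) \<in> borel_measurable ?\<nu>" by (rule measurable_compose[OF a0m measurable_ennreal])
  have massb: "(\<integral>\<^sup>+ p. ennreal (b0 p) \<partial>?\<nu>) = 1"
  proof -
    have "(\<integral>\<^sup>+ p. ennreal (b0 p) \<partial>?\<nu>) = (\<integral>\<^sup>+ tz. \<integral>\<^sup>+ x. ennreal (b0 (x,tz)) \<partial>\<mu> \<partial>tz_ref)"
      using PS.nn_integral_snd[OF b0m_e] by simp
    also have "\<dots> = (\<integral>\<^sup>+ tz. ennreal (ptz \<mu> f (fst tz) (snd tz)) \<partial>tz_ref)"
    proof (rule nn_integral_cong_AE)
      have G0: "(0::real) \<le> 1 / G^2" by simp
      show "AE tz in tz_ref. (\<integral>\<^sup>+ x. ennreal (b0 (x,tz)) \<partial>\<mu>) = ennreal (ptz \<mu> f (fst tz) (snd tz))"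
      proof (rule AE_mp[OF Zae AE_I2], intro impI)
        fix tz assume "tz \<in> space tz_ref" "AE x in \<mu>. px f x = 0 \<longrightarrow> f x (fst tz) (snd tz) = 0"
        from pertz[OF this(2) order_refl G0] show "(\<integral>\<^sup>+ x. ennreal (b0 (x,tz)) \<partial>\<mu>) = ennreal (ptz \<mu> f (fst tz) (snd tz))" by simp
      qed
    qed
    finally show ?thesis using IT3 by simp
  qed
  have massa: "(\<integral>\<^sup>+ p. ennreal (a0 p) \<partial>?\<nu>) = 1"
  proof -
    have "(\<integral>\<^sup>+ p. ennreal (a0 p) \<partial>?\<nu>) = (\<integral>\<^sup>+ x. \<integral>\<^sup>+ tz. ennreal (a0 (x,tz)) \<partial>tz_ref \<partial>\<mu>)"
      using T.nn_integral_fst[OF a0m_e] by simp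
    also have "\<dots> = (\<integral>\<^sup>+ x. ennreal (px f x) * (\<integral>\<^sup>+ tz. ennreal (ptz \<mu> f (fst tz) (snd tz)) \<partial>tz_ref) \<partial>\<mu>)"
      unfolding a0_def using px_nn ptz_nn
      by (simp add: ennreal_mult nn_integral_cmult[OF measurable_compose[OF ptzm measurable_ennreal]])
    finally show ?thesis using IT3 IM(3) by simp
  qed
  have sets_tz: "sets tz_ref = sets (count_space UNIV \<Otimes>\<^sub>M (borel :: real measure))"
    unfolding tz_ref_def by (rule sets_pair_measure_cong) simp_all
  have gm: "rep_map \<Phi> \<in> measurable ?\<nu> target_space"
  proof -
    have eq: "rep_map \<Phi> = (\<lambda>p. (\<Phi> (fst p), snd p))" by (simp add: rep_map_def fun_eq_iff split_beta)
    have s2: "snd \<in> measurable ?\<nu> (count_space UNIV \<Otimes>\<^sub>M (borel :: real measure))"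
      using measurable_snd[of \<mu> tz_ref] unfolding measurable_cong_sets[OF refl sets_tz] .
    show ?thesis unfolding eq target_space_def
      by (rule measurable_Pair[OF measurable_compose[OF measurable_fst Phi_meas] s2])
  qed
  have dmeas: "(\<lambda>w. rep_cost (fst w) (snd w)) \<in> borel_measurable (target_space \<Otimes>\<^sub>M (target_space :: ('r \<times> bool \<times> real) measure))"
  proof -
    have eq: "(\<lambda>w. rep_cost (fst w) (snd w)) = (\<lambda>w::('r \<times> bool \<times> real) \<times> ('r \<times> bool \<times> real). norm (fst (fst w) - fst (snd w)))"
      by (simp add: rep_cost_def)
    have m1: "(\<lambda>w::('r \<times> bool \<times> real) \<times> ('r \<times> bool \<times> real). fst (fst w)) \<in> borel_measurable (target_space \<Otimes>\<^sub>M target_space)"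
      unfolding target_space_def by (rule measurable_compose[OF measurable_fst measurable_fst])
    have m2: "(\<lambda>w::('r \<times> bool \<times> real) \<times> ('r \<times> bool \<times> real). fst (snd w)) \<in> borel_measurable (target_space \<Otimes>\<^sub>M target_space)"
      unfolding target_space_def by (rule measurable_compose[OF measurable_snd measurable_fst])
    show ?thesis unfolding eq
      by (rule measurable_compose[OF borel_measurable_diff[OF m1 m2] borel_measurable_norm])
  qed
  have dD: "rep_cost (rep_map \<Phi> \<omega>) (rep_map \<Phi> \<omega>') \<le> diameter Rs" for \<omega> \<omega>'
  proof -
    have "rep_cost (rep_map \<Phi> \<omega>) (rep_map \<Phi> \<omega>') = dist (\<Phi> (fst \<omega>)) (\<Phi> (fst \<omega>'))"
      by (simp add: rep_cost_def rep_map_def split_beta dist_norm)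
    also have "\<dots> \<le> diameter Rs" by (rule diameter_bounded_bound[OF R_bounded Phi_range Phi_range])
    finally show ?thesis .
  qed
  have d0: "rep_cost (rep_map \<Phi> \<omega>) (rep_map \<Phi> \<omega>) = 0" for \<omega> by (simp add: rep_cost_def)
  have ptzm_e: "(\<lambda>tz. ennreal (ptz \<mu> f (fst tz) (snd tz))) \<in> borel_measurable tz_ref"
    by (rule measurable_compose[OF ptzm measurable_ennreal])
  have pxm_e: "(\<lambda>x. ennreal (px f x)) \<in> borel_measurable \<mu>"
    by (rule measurable_compose[OF pxm measurable_ennreal])
  have sfD: "sigma_finite_measure (density tz_ref (\<lambda>tz. ennreal (ptz \<mu> f (fst tz) (snd tz))))"
  proof (rule prob_space_imp_sigma_finite, rule prob_spaceI)
    show "emeasure (density tz_ref (\<lambda>tz. ennreal (ptz \<mu> f (fst tz) (snd tz))))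
        (space (density tz_ref (\<lambda>tz. ennreal (ptz \<mu> f (fst tz) (snd tz))))) = 1"
    proof -
      have "emeasure (density tz_ref (\<lambda>tz. ennreal (ptz \<mu> f (fst tz) (snd tz)))) (space tz_ref)
          = (\<integral>\<^sup>+ x. ennreal (ptz \<mu> f (fst x) (snd x)) * indicator (space tz_ref) x \<partial>tz_ref)"
        by (rule emeasure_density[OF ptzm_e sets.top])
      also have "\<dots> = 1" using IT3 by (simp cong: nn_integral_cong)
      finally show ?thesis by simp
    qed
  qed
  have PA: "P_prod \<mu> f \<Phi> = distr (density ?\<nu> (\<lambda>p. ennreal (a0 p))) target_space (rep_map \<Phi>)"
  proof -
    have "density \<mu> (\<lambda>x. ennreal (px f x)) \<Otimes>\<^sub>M density tz_ref (\<lambda>tz. ennreal (ptz \<mu> f (fst tz) (snd tz)))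
        = density ?\<nu> (\<lambda>(x,y). ennreal (px f x) * ennreal (ptz \<mu> f (fst y) (snd y)))"
      by (rule pair_measure_density[OF pxm_e ptzm_e sfT sfD])
    also have "(\<lambda>(x,y). ennreal (px f x) * ennreal (ptz \<mu> f (fst y) (snd y))) = (\<lambda>p. ennreal (a0 p))"
      using px_nn ptz_nn by (simp add: a0_def fun_eq_iff split_beta ennreal_mult)
    finally show ?thesis unfolding P_prod_def by simp
  qed
  have wl: "(\<lambda>t z x. 1 / (\<phi>\<^sub>\<eta> z (xz x) * e\<^sub>\<eta> t (xt x))) = w" by (simp add: w_def)
  have QQ: "Q_joint \<mu> f (\<lambda>t z x. 1 / (\<phi>\<^sub>\<eta> z (xz x) * e\<^sub>\<eta> t (xt x))) \<Phi>
      = distr (density ?\<nu> (\<lambda>p. ennreal (b0 p))) target_space (rep_map \<Phi>)"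
  proof -
    have "(\<lambda>(x, t, z). ennreal (q_cond \<mu> f w x t z * ptz \<mu> f t z)) = (\<lambda>p. ennreal (b0 p))"
      by (simp add: b0_def fun_eq_iff split_beta)
    then show ?thesis unfolding Q_joint_def wl by simp
  qed
  have emd: "emeasure (density ?\<nu> g) S = (\<integral>\<^sup>+ p. g p * indicator S p \<partial>?\<nu>)"
    if "g \<in> borel_measurable ?\<nu>" "S \<in> sets ?\<nu>" for g S
    by (rule emeasure_density[OF that])
  have Wk: "wasserstein1 rep_cost (P_prod \<mu> f \<Phi>) (Q_joint \<mu> f (\<lambda>t z x. 1 / (\<phi>\<^sub>\<eta> z (xz x) * e\<^sub>\<eta> t (xt x))) \<Phi>)
      \<le> ennreal ((1-\<kappa>) * diameter Rs)" if k0: "0 \<le> \<kappa>" and k1: "\<kappa> \<le> 1/G^2" and k2: "\<kappa> < 1" for \<kappa>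
  proof -
    define rr where "rr = (\<lambda>p. (b0 p - \<kappa> * a0 p) / (1-\<kappa>))"
    define A where "A = density ?\<nu> (\<lambda>p. ennreal (a0 p))"
    define QB where "QB = density ?\<nu> (\<lambda>p. ennreal (b0 p))"
    define R where "R = density ?\<nu> (\<lambda>p. ennreal (rr p))"
    have rrm: "(\<lambda>p. ennreal (rr p)) \<in> borel_measurable ?\<nu>" unfolding rr_def
      by (rule measurable_compose[OF _ measurable_ennreal])
         (intro borel_measurable_divide borel_measurable_diff b0m borel_measurable_times measurable_const a0m; simp)
    note kn = keynu[OF k0 k1]
    have dec: "emeasure QB S = ennreal \<kappa> * emeasure A S + ennreal (1-\<kappa>) * emeasure R S" if S: "S \<in> sets A" for S
    proof -
      have S': "S \<in> sets ?\<nu>" using S by (simp add: A_def)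
      have m1: "(\<lambda>p. ennreal (a0 p) * indicator S p) \<in> borel_measurable ?\<nu>"
        by (rule borel_measurable_times_ennreal[OF a0m_e borel_measurable_indicator[OF S']])
      have m2: "(\<lambda>p. ennreal (rr p) * indicator S p) \<in> borel_measurable ?\<nu>"
        by (rule borel_measurable_times_ennreal[OF rrm borel_measurable_indicator[OF S']])
      have "ennreal \<kappa> * emeasure A S + ennreal (1-\<kappa>) * emeasure R S
          = (\<integral>\<^sup>+ p. ennreal \<kappa> * (ennreal (a0 p) * indicator S p) \<partial>?\<nu>) + (\<integral>\<^sup>+ p. ennreal (1-\<kappa>) * (ennreal (rr p) * indicator S p) \<partial>?\<nu>)"
        unfolding A_def R_def emd[OF a0m_e S'] emd[OF rrm S'] by (simp add: nn_integral_cmult[OF m1] nn_integral_cmult[OF m2])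
      also have "\<dots> = (\<integral>\<^sup>+ p. ennreal \<kappa> * (ennreal (a0 p) * indicator S p) + ennreal (1-\<kappa>) * (ennreal (rr p) * indicator S p) \<partial>?\<nu>)"
        by (rule nn_integral_add[symmetric]; rule borel_measurable_times_ennreal[OF measurable_const]) (simp_all add: m1 m2)
      also have "\<dots> = (\<integral>\<^sup>+ p. ennreal (b0 p) * indicator S p \<partial>?\<nu>)"
      proof (rule nn_integral_cong_AE)
        show "AE p in ?\<nu>. ennreal \<kappa> * (ennreal (a0 p) * indicator S p) + ennreal (1-\<kappa>) * (ennreal (rr p) * indicator S p)
            = ennreal (b0 p) * indicator S p"
          using kn
        proof (rule AE_mp[OF _ AE_I2], intro impI)
          fix p assume kp: "\<kappa> * a0 p \<le> b0 p"
          have r0: "0 \<le> rr p" unfolding rr_def using kp k2 by simp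
          have "ennreal \<kappa> * ennreal (a0 p) + ennreal (1-\<kappa>) * ennreal (rr p) = ennreal (\<kappa> * a0 p + (1-\<kappa>) * rr p)"
            using k0 k2 a0nn[of p] r0 by (simp add: ennreal_mult ennreal_plus)
          also have "\<kappa> * a0 p + (1-\<kappa>) * rr p = b0 p" unfolding rr_def using k2 by simp
          finally show "ennreal \<kappa> * (ennreal (a0 p) * indicator S p) + ennreal (1-\<kappa>) * (ennreal (rr p) * indicator S p)
            = ennreal (b0 p) * indicator S p"
            by (simp split: split_indicator)
        qed
      qed
      also have "\<dots> = emeasure QB S" unfolding QB_def emd[OF b0m_e S'] ..
      finally show ?thesis by simp
    qed
    have pA: "prob_space A"
    proof (rule prob_spaceI)
      have "emeasure A (space ?\<nu>) = 1" unfolding A_def emd[OF a0m_e sets.top] using massa by (simp cong: nn_integral_cong)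
      then show "emeasure A (space A) = 1" by (simp add: A_def)
    qed
    have pR: "prob_space R"
    proof (rule prob_spaceI)
      have Q1: "emeasure QB (space ?\<nu>) = 1" unfolding QB_def emd[OF b0m_e sets.top] using massb by (simp cong: nn_integral_cong)
      have A1: "emeasure A (space ?\<nu>) = 1" unfolding A_def emd[OF a0m_e sets.top] using massa by (simp cong: nn_integral_cong)
      have "1 = ennreal \<kappa> + ennreal (1-\<kappa>) * emeasure R (space ?\<nu>)"
        using dec[of "space ?\<nu>"] Q1 A1 by (simp add: A_def)
      moreover obtain X where X: "emeasure R (space ?\<nu>) = X" by blast
      ultimately have eqX: "1 = ennreal \<kappa> + ennreal (1-\<kappa>) * X" by simp
      have "X = 1"
      proof (cases X rule: ennreal_cases)
        case (real r)
        then have "ennreal 1 = ennreal (\<kappa> + (1-\<kappa>) * r)" using eqX k0 k2 by (simp add: ennreal_mult ennreal_plus)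
        then have "1 = \<kappa> + (1-\<kappa>) * r" using k0 k2 real by (subst (asm) ennreal_inj) simp_all
        then have "(1-\<kappa>) * (r - 1) = 0" by (simp add: algebra_simps)
        then have "r = 1" using k2 by simp
        then show ?thesis using real by simp
      next
        case top
        then have "ennreal (1-\<kappa>) * X = \<top>" using k2 by (simp add: ennreal_mult_top)
        then show ?thesis using eqX by simp
      qed
      then show "emeasure R (space R) = 1" using X by (simp add: R_def)
    qed
    have cb: "wasserstein1 rep_cost (distr A target_space (rep_map \<Phi>)) (distr QB target_space (rep_map \<Phi>))
        \<le> ennreal ((1-\<kappa>) * diameter Rs)"
    proof (rule coupling_bound[OF pA pR _ _ k0 _ dec])
      show "sets R = sets A" by (simp add: R_def A_def)
      show "sets QB = sets A" by (simp add: QB_def A_def)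
      show "\<kappa> \<le> 1" using k2 by simp
      show "rep_map \<Phi> \<in> measurable A target_space" using gm by (simp add: A_def)
      show "(\<lambda>w. rep_cost (fst w) (snd w)) \<in> borel_measurable (target_space \<Otimes>\<^sub>M (target_space :: ('r \<times> bool \<times> real) measure))" using dmeas by simp
    qed (simp_all add: d0 dD)
    then show ?thesis unfolding PA QQ A_def QB_def .
  qed
  define D where "D = diameter Rs"
  have Dnn: "0 \<le> D"
  proof -
    have "0 \<le> rep_cost (rep_map \<Phi> undefined) (rep_map \<Phi> undefined)" by (simp add: rep_cost_def)
    also have "\<dots> \<le> D" unfolding D_def by (rule dD)
    finally show ?thesis .
  qed
  have Gt0: "0 < \<Gamma>\<^sub>t" and Gz0: "0 < \<Gamma>\<^sub>z" using Gt Gz by simp_all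
  have lnG: "ln \<Gamma>\<^sub>t + ln \<Gamma>\<^sub>z = ln G" unfolding G_def using Gt0 Gz0 by (simp add: ln_mult)
  have gb: "1 - 1 / G^2 \<le> sqrt (ln G)" by (rule gamma_bound[OF Gge])
  have G2: "1 \<le> G^2" using Gge by (simp add: one_le_power)
  show ?thesis unfolding lnG D_def[symmetric]
  proof (rule ennreal_le_epsilon)
    fix e :: real assume e: "0 < e"
    define \<delta> where "\<delta> = min (1/2) (e / (D+1))"
    have d0: "0 < \<delta>" unfolding \<delta>_def using e Dnn by simp
    have d1: "\<delta> \<le> 1/2" unfolding \<delta>_def by (rule min.cobounded1)
    have d2: "\<delta> \<le> e / (D+1)" unfolding \<delta>_def by (rule min.cobounded2)
    define \<kappa> where "\<kappa> = (1 - \<delta>) / G^2"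
    have G2p: "0 < G^2" using Gge by simp
    have k0: "0 \<le> \<kappa>" unfolding \<kappa>_def using d1 G2p by simp
    have k1: "\<kappa> \<le> 1 / G^2" unfolding \<kappa>_def using d0 G2p by (simp add: divide_right_mono)
    have k2: "\<kappa> < 1"
    proof -
      have "\<kappa> \<le> 1 / G^2" by (rule k1)
      also have "\<dots> \<le> 1" using G2 by (simp add: divide_le_eq_1)
      finally have "\<kappa> \<le> 1" .
      moreover have "\<kappa> \<noteq> 1"
      proof
        assume "\<kappa> = 1"
        then have "1 - \<delta> = G^2" unfolding \<kappa>_def using G2p by (simp add: field_simps)
        then show False using d0 G2 by simp
      qed
      ultimately show ?thesis by simp
    qed
    have "1 - \<kappa> = (1 - 1/G^2) + \<delta> / G^2" unfolding \<kappa>_def using G2p by (simp add: field_simps)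
    also have "\<delta> / G^2 \<le> \<delta>" using d0 G2 by (simp add: divide_le_eq mult_le_cancel_left1)
    finally have "1 - \<kappa> \<le> sqrt (ln G) + \<delta>" using gb by simp
    then have "(1 - \<kappa>) * D \<le> (sqrt (ln G) + \<delta>) * D" using Dnn by (rule mult_right_mono)
    also have "\<dots> = D * sqrt (ln G) + \<delta> * D" by (simp add: algebra_simps)
    also have "\<delta> * D \<le> e"
    proof -
      have "\<delta> * D \<le> e / (D+1) * D" using d2 Dnn by (rule mult_right_mono)
      also have "\<dots> \<le> e" using e Dnn by (simp add: field_simps)
      finally show ?thesis .
    qed
    finally have ineq: "(1 - \<kappa>) * D \<le> D * sqrt (ln G) + e" by simp
    have "wasserstein1 rep_cost (P_prod \<mu> f \<Phi>) (Q_joint \<mu> f (\<lambda>t z x. 1 / (\<phi>\<^sub>\<eta> z (xz x) * e\<^sub>\<eta> t (xt x))) \<Phi>)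
        \<le> ennreal ((1 - \<kappa>) * D)" using Wk[OF k0 k1 k2] by (simp add: D_def)
    also have "\<dots> \<le> ennreal (D * sqrt (ln G) + e)" by (rule ennreal_leI[OF ineq])
    also have "\<dots> = ennreal (D * sqrt (ln G)) + ennreal e"
      using Dnn e ln_ge_zero[OF Gge] by (intro ennreal_plus) auto
    finally show "wasserstein1 rep_cost (P_prod \<mu> f \<Phi>) (Q_joint \<mu> f (\<lambda>t z x. 1 / (\<phi>\<^sub>\<eta> z (xz x) * e\<^sub>\<eta> t (xt x))) \<Phi>)
        \<le> ennreal (D * sqrt (ln G)) + ennreal e" .
  qed
qed

end
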